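(* Let $\Phi$ be the matrix (with respect to $h_0$) of a left-invariant metric on $G$ of nonnegative sectional curvature, and let $\mathfrak p_0\subset\mathfrak g$ be the eigenspace of $\Phi$ for its smallest eigenvalue (equivalently, the eigenspace of $\Psi=I-\Phi^{-1}$ for its smallest eigenvalue). If $X\in\mathfrak p_0$, $Y\in\mathfrak g$ and $[X,Y]=0$, then $[X,\Phi^{-1}Y]\in\mathfrak p_0$.
   Context: $G$ is a compact Lie group with Lie algebra $\mathfrak g$ and bi-invariant metric $h_0$. The matrix of a left-invariant metric $h$ is the unique $h_0$-self-adjoint positive definite endomorphism $\Phi$ of $\mathfrak g$ with $h(X,Y)=h_0(\Phi X,Y)$ for all $X,Y\in\mathfrak g$. *)

theory Defs
  imports "HOL-Analysis.Analysis"
begin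

text \<open>The Lie algebra g of a compact Lie group G is modelled as a finite-dimensional
real inner product space (type class euclidean_space; the inner product is the
bi-invariant metric h0) with a Lie bracket br for which h0 is ad-invariant.
These are exactly the Lie algebras of compact Lie groups.\<close>

definition compact_lie_algebra :: "('a::euclidean_space \<Rightarrow> 'a \<Rightarrow> 'a) \<Rightarrow> bool" where
  "compact_lie_algebra br \<longleftrightarrow>
     bilinear br \<and>
     (\<forall>x. br x x = 0) \<and>
     (\<forall>x y z. br x (br y z) + br y (br z x) + br z (br x y) = 0) \<and>
     (\<forall>x y z. inner (br x y) z = - inner y (br x z))"

definition metric_matrix :: "('a::euclidean_space \<Rightarrow> 'a) \<Rightarrow> bool" where
  "metric_matrix \<Phi> \<longleftrightarrow> linear \<Phi> \<and>
     (\<forall>x y. inner (\<Phi> x) y = inner x (\<Phi> y)) \<and>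
     (\<forall>x. x \<noteq> 0 \<longrightarrow> inner (\<Phi> x) x > 0)"

definition lmetric :: "('a::euclidean_space \<Rightarrow> 'a) \<Rightarrow> 'a \<Rightarrow> 'a \<Rightarrow> real" where
  "lmetric \<Phi> x y = inner (\<Phi> x) y"

text \<open>Levi-Civita connection on left-invariant fields (Koszul formula).\<close>
definition levi_civita ::
  "('a::euclidean_space \<Rightarrow> 'a \<Rightarrow> 'a) \<Rightarrow> ('a \<Rightarrow> 'a) \<Rightarrow> 'a \<Rightarrow> 'a \<Rightarrow> 'a" where
  "levi_civita br \<Phi> X Y = (THE W. \<forall>Z.
      2 * lmetric \<Phi> W Z = lmetric \<Phi> (br X Y) Z - lmetric \<Phi> (br Y Z) X + lmetric \<Phi> (br Z X) Y)"

definition curvature ::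
  "('a::euclidean_space \<Rightarrow> 'a \<Rightarrow> 'a) \<Rightarrow> ('a \<Rightarrow> 'a) \<Rightarrow> 'a \<Rightarrow> 'a \<Rightarrow> 'a \<Rightarrow> 'a" where
  "curvature br \<Phi> X Y Z =
     levi_civita br \<Phi> X (levi_civita br \<Phi> Y Z) - levi_civita br \<Phi> Y (levi_civita br \<Phi> X Z)
     - levi_civita br \<Phi> (br X Y) Z"

definition nonneg_sec_curv :: "('a::euclidean_space \<Rightarrow> 'a \<Rightarrow> 'a) \<Rightarrow> ('a \<Rightarrow> 'a) \<Rightarrow> bool" where
  "nonneg_sec_curv br \<Phi> \<longleftrightarrow> (\<forall>X Y. lmetric \<Phi> (curvature br \<Phi> X Y Y) X \<ge> 0)"

definition eigenvalues_of :: "('a::real_vector \<Rightarrow> 'a) \<Rightarrow> real set" where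
  "eigenvalues_of f = {l. \<exists>v. v \<noteq> 0 \<and> f v = l *\<^sub>R v}"

definition eigenspace :: "('a::real_vector \<Rightarrow> 'a) \<Rightarrow> real \<Rightarrow> 'a set" where
  "eigenspace f l = {v. f v = l *\<^sub>R v}"

definition smallest_eigenspace :: "('a::real_vector \<Rightarrow> 'a) \<Rightarrow> 'a set" where
  "smallest_eigenspace f = eigenspace f (Min (eigenvalues_of f))"

end

theory Submission imports Defs begin

context
  fixes br :: "'a::euclidean_space \<Rightarrow> 'a \<Rightarrow> 'a" and \<Phi> :: "'a \<Rightarrow> 'a"
  assumes cla: "compact_lie_algebra br" and mm: "metric_matrix \<Phi>"
begin

lemma bil: "bilinear br" using cla by (simp add: compact_lie_algebra_def)
lemma brxx: "br x x = 0" using cla by (simp add: compact_lie_algebra_def)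
lemma adinv: "inner (br x y) z = - inner y (br x z)" using cla by (simp add: compact_lie_algebra_def)
lemma br_add_l: "br (a + b) c = br a c + br b c" using bil by (simp add: bilinear_ladd)
lemma br_add_r: "br c (a + b) = br c a + br c b" using bil by (simp add: bilinear_radd)
lemma br_antisym: "br y x = - br x y"
proof -
  have "br (x+y) (x+y) = br x x + br x y + (br y x + br y y)" by (simp add: br_add_l br_add_r)
  then have "br x y + br y x = 0" by (simp add: brxx)
  then show ?thesis by (simp add: eq_neg_iff_add_eq_0 add.commute)
qed
lemma br_zero_r: "br x 0 = 0" using bil by (simp add: bilinear_rzero)
lemma br_zero_l: "br 0 x = 0" using bil by (simp add: bilinear_lzero)

lemma lin: "linear \<Phi>" using mm by (simp add: metric_matrix_def)
lemma sym: "inner (\<Phi> x) y = inner x (\<Phi> y)" using mm unfolding metric_matrix_def by blast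
lemma pos: "x \<noteq> 0 \<Longrightarrow> inner (\<Phi> x) x > 0" using mm unfolding metric_matrix_def by blast
lemma inj: "inj \<Phi>"
proof -
  have "\<Phi> x = 0 \<Longrightarrow> x = 0" for x using pos[of x] by force
  then show ?thesis using lin by (simp add: linear_injective_0)
qed
lemma surj: "surj \<Phi>" using lin inj by (simp add: linear_injective_imp_surjective)
lemma Phi_inv: "\<Phi> (inv \<Phi> y) = y" using surj by (simp add: surj_f_inv_f)
lemma Phi_add: "\<Phi> (a + b) = \<Phi> a + \<Phi> b" using lin by (simp add: linear_add)
lemma Phi_diff: "\<Phi> (a - b) = \<Phi> a - \<Phi> b" using lin by (simp add: linear_diff)
lemma Phi_scale: "\<Phi> (c *\<^sub>R a) = c *\<^sub>R \<Phi> a" using lin by (simp add: linear_scale)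

lemma koszul_N:
  fixes A B :: 'a
  defines "N \<equiv> (1/2) *\<^sub>R (br A B + inv \<Phi> (br A (\<Phi> B) + br B (\<Phi> A)))"
  shows "2 * lmetric \<Phi> N Z = lmetric \<Phi> (br A B) Z - lmetric \<Phi> (br B Z) A + lmetric \<Phi> (br Z A) B"
proof -
  have "\<Phi> N = (1/2) *\<^sub>R (\<Phi> (br A B) + (br A (\<Phi> B) + br B (\<Phi> A)))"
    unfolding N_def by (simp add: Phi_scale Phi_add Phi_inv)
  then have l: "2 * lmetric \<Phi> N Z = inner (\<Phi> (br A B)) Z + inner (br A (\<Phi> B)) Z + inner (br B (\<Phi> A)) Z"
    by (simp add: lmetric_def inner_add_left)
  have t2: "lmetric \<Phi> (br B Z) A = - inner (br B (\<Phi> A)) Z"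
    unfolding lmetric_def sym[of "br B Z"] by (metis adinv inner_commute)
  have t3: "lmetric \<Phi> (br Z A) B = inner (br A (\<Phi> B)) Z"
    unfolding lmetric_def sym[of "br Z A"]
    by (metis adinv br_antisym inner_commute inner_minus_left minus_minus)
  show ?thesis using l t2 t3 by (simp add: lmetric_def)
qed

lemma lm_unique:
  assumes "\<forall>Z. lmetric \<Phi> W Z = lmetric \<Phi> W' Z" shows "W = W'"
proof (rule ccontr)
  assume "W \<noteq> W'"
  then have "inner (\<Phi> (W - W')) (W - W') > 0" using pos by simp
  moreover have "inner (\<Phi> (W - W')) (W - W') = 0"
    using assms[rule_format, of "W - W'"] by (simp add: lmetric_def Phi_diff inner_diff_left)
  ultimately show False by simp
qed

lemma koszul:
  "2 * lmetric \<Phi> (levi_civita br \<Phi> A B) Z = lmetric \<Phi> (br A B) Z - lmetric \<Phi> (br B Z) A + lmetric \<Phi> (br Z A) B"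
proof -
  let ?N = "(1/2) *\<^sub>R (br A B + inv \<Phi> (br A (\<Phi> B) + br B (\<Phi> A)))"
  have "levi_civita br \<Phi> A B = ?N"
    unfolding levi_civita_def
  proof (rule the_equality)
    show "\<forall>Z. 2 * lmetric \<Phi> ?N Z = lmetric \<Phi> (br A B) Z - lmetric \<Phi> (br B Z) A + lmetric \<Phi> (br Z A) B"
      using koszul_N by blast
  next
    fix W assume h: "\<forall>Z. 2 * lmetric \<Phi> W Z = lmetric \<Phi> (br A B) Z - lmetric \<Phi> (br B Z) A + lmetric \<Phi> (br Z A) B"
    show "W = ?N" apply (rule lm_unique) using h koszul_N by (metis mult_cancel_left zero_neq_numeral)
  qed
  then show ?thesis using koszul_N by simp
qed


lemma fin_eig: "finite (eigenvalues_of \<Phi>)"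
proof -
  let ?E = "eigenvalues_of \<Phi>"
  define v where "v l = (SOME v. v \<noteq> 0 \<and> \<Phi> v = l *\<^sub>R v)" for l
  have v: "v l \<noteq> 0 \<and> \<Phi> (v l) = l *\<^sub>R v l" if "l \<in> ?E" for l
    using that unfolding eigenvalues_of_def v_def by (rule CollectE) (rule someI_ex)
  have injv: "inj_on v ?E"
  proof (rule inj_onI)
    fix l m assume "l \<in> ?E" "m \<in> ?E" "v l = v m"
    then have "l *\<^sub>R v l = m *\<^sub>R v l" "v l \<noteq> 0" using v by metis+
    then show "l = m" by (simp add: scaleR_cancel_right)
  qed
  have "pairwise orthogonal (v ` ?E)"
  proof (clarsimp simp: pairwise_def orthogonal_def)
    fix l m assume l: "l \<in> ?E" and m: "m \<in> ?E" and ne: "v l \<noteq> v m"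
    then have "l \<noteq> m" by auto
    have "l * inner (v l) (v m) = inner (\<Phi> (v l)) (v m)" using v[OF l] by simp
    also have "\<dots> = inner (v l) (\<Phi> (v m))" by (rule sym)
    also have "\<dots> = m * inner (v l) (v m)" using v[OF m] by simp
    finally show "inner (v l) (v m) = 0" using \<open>l \<noteq> m\<close> by simp
  qed
  moreover have "0 \<notin> v ` ?E" using v by force
  ultimately have "independent (v ` ?E)" by (rule pairwise_orthogonal_independent)
  then have "finite (v ` ?E)" using independent_bound by blast
  then show ?thesis using injv finite_imageD by blast
qed

end

lemma psd_eq:
  fixes T :: "'a::euclidean_space \<Rightarrow> 'a"
  assumes "linear T" "\<And>x y. inner (T x) y = inner x (T y)" "\<And>x. inner (T x) x \<ge> 0" "inner (T a) a = 0"
  shows "T a = 0"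
proof -
  obtain b where hb: "T a = b" by blast
  obtain c where hc: "inner (T b) b = c" by blast
  have e: "inner (T (a - t *\<^sub>R b)) (a - t *\<^sub>R b) = - 2 * t * inner b b + t*t * c" for t
  proof -
    have "T (a - t *\<^sub>R b) = T a - t *\<^sub>R T b" using assms(1) by (simp add: linear_diff linear_scale)
    then have "inner (T (a - t *\<^sub>R b)) (a - t *\<^sub>R b) = inner (T a - t *\<^sub>R T b) (a - t *\<^sub>R b)" by simp
    also have "\<dots> = inner (T a) a - t * inner (T a) b - t * inner (T b) a + t*t*inner (T b) b"
      by (simp add: inner_diff_left inner_diff_right algebra_simps)
    also have "inner (T b) a = inner b (T a)" using assms(2) by simp
    finally show ?thesis using assms(4) hb hc by (simp add: algebra_simps)
  qed
  have ge: "- 2 * t * inner b b + t*t * c \<ge> 0" for t using assms(3) e by metis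
  have c0: "c \<ge> 0" using assms(3) hc by blast
  have "inner b b \<le> 0"
  proof (cases "c = 0")
    case True then show ?thesis using ge[of 1] by simp
  next
    case False
    then have cp: "c > 0" using c0 by simp
    have "- 2 * (inner b b / c) * inner b b + (inner b b / c)*(inner b b / c) * c \<ge> 0" by (rule ge)
    then have "- (inner b b * inner b b) / c \<ge> 0" using cp by (simp add: field_simps power2_eq_square)
    then have "0 \<le> - (inner b b * inner b b) / c * c" using cp by (simp only: mult_nonneg_nonneg less_imp_le)
    then have "inner b b * inner b b \<le> 0" using cp by simp
    show ?thesis
    proof (rule ccontr)
      assume "\<not> inner b b \<le> 0"
      then have "inner b b > 0" using inner_ge_zero[of b] by linarith
      then have "inner b b * inner b b > 0" using mult_pos_pos by blast
      then show False using \<open>inner b b * inner b b \<le> 0\<close> by simp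
    qed
  qed
  then show ?thesis using hb inner_ge_zero[of b] by (metis order.antisym inner_eq_zero_iff)
qed

context
  fixes br :: "'a::euclidean_space \<Rightarrow> 'a \<Rightarrow> 'a" and \<Phi> :: "'a \<Rightarrow> 'a"
  assumes cla: "compact_lie_algebra br" and mm: "metric_matrix \<Phi>"
begin

lemma rayleigh_eq:
  assumes "\<And>x. inner (\<Phi> x) x \<ge> c * inner x x" "inner (\<Phi> a) a = c * inner a a"
  shows "\<Phi> a = c *\<^sub>R a"
proof -
  have "(\<lambda>x. \<Phi> x - c *\<^sub>R x) a = 0"
  proof (rule psd_eq[where T="\<lambda>x. \<Phi> x - c *\<^sub>R x"])
    show "linear (\<lambda>x. \<Phi> x - c *\<^sub>R x)" 
      by (rule linearI) (simp_all add: Phi_add[OF cla mm] Phi_scale[OF cla mm] scaleR_right_distrib scaleR_right_diff_distrib)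
    show "inner (\<Phi> x - c *\<^sub>R x) y = inner x (\<Phi> y - c *\<^sub>R y)" for x y
      using sym[OF cla mm, of x y] by (simp add: inner_diff_left inner_diff_right)
    show "inner (\<Phi> x - c *\<^sub>R x) x \<ge> 0" for x using assms(1)[of x] by (simp add: inner_diff_left)
    show "inner (\<Phi> a - c *\<^sub>R a) a = 0" using assms(2) by (simp add: inner_diff_left)
  qed
  then show ?thesis by simp
qed

lemma rayleigh_min: "\<exists>\<mu>. \<mu> \<in> eigenvalues_of \<Phi> \<and> (\<forall>x. inner (\<Phi> x) x \<ge> \<mu> * inner x x)"
proof -
  let ?S = "sphere (0::'a) 1"
  let ?f = "\<lambda>x. inner (\<Phi> x) x"
  obtain e :: 'a where "e \<in> Basis" using nonempty_Basis by blast
  then have "norm e = 1" by simp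
  then have ne: "?S \<noteq> {}" by auto
  have "continuous_on ?S ?f"
  proof -
    have "bounded_linear \<Phi>" using lin[OF cla mm] by (simp add: linear_conv_bounded_linear)
    then have "continuous_on ?S \<Phi>" by (rule linear_continuous_on)
    then show ?thesis using continuous_on_inner continuous_on_id by blast
  qed
  then obtain x0 where x0: "x0 \<in> ?S" "\<And>y. y \<in> ?S \<Longrightarrow> ?f x0 \<le> ?f y"
    using continuous_attains_inf[OF compact_sphere ne] by blast
  let ?\<mu> = "?f x0"
  have ray: "?f x \<ge> ?\<mu> * inner x x" for x
  proof (cases "x = 0")
    case True then show ?thesis by simp
  next
    case False
    let ?y = "(1 / norm x) *\<^sub>R x"
    have "?y \<in> ?S" using False by simp
    then have "?\<mu> \<le> ?f ?y" by (rule x0(2))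
    also have "?f ?y = ?f x / (norm x)^2" using Phi_scale[OF cla mm] by (simp add: power2_eq_square)
    finally have "?\<mu> * (norm x)^2 \<le> ?f x" using False by (simp add: le_divide_eq)
    then show ?thesis by (simp add: power2_norm_eq_inner)
  qed
  have "inner x0 x0 = 1" using x0(1) by (simp add: power2_norm_eq_inner[symmetric])
  then have "\<Phi> x0 = ?\<mu> *\<^sub>R x0" using rayleigh_eq[OF ray] by simp
  moreover have "x0 \<noteq> 0" using x0(1) by auto
  ultimately have "?\<mu> \<in> eigenvalues_of \<Phi>" unfolding eigenvalues_of_def by blast
  then show ?thesis using ray by blast
qed

end

theorem mainTheorem6:
  fixes br :: "'a::euclidean_space \<Rightarrow> 'a \<Rightarrow> 'a" and \<Phi> :: "'a \<Rightarrow> 'a" and X Y :: 'a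
  assumes "compact_lie_algebra br"
    and "metric_matrix \<Phi>"
    and "nonneg_sec_curv br \<Phi>"
    and "X \<in> smallest_eigenspace \<Phi>"
    and "br X Y = 0"
  shows "br X (inv \<Phi> Y) \<in> smallest_eigenspace \<Phi>"
proof (cases "X = 0")
  case True
  then show ?thesis using br_zero_l[OF assms(1,2)] lin[OF assms(1,2)]
    by (simp add: smallest_eigenspace_def eigenspace_def linear_0)
next
  case False
  note cla = assms(1) and mm = assms(2)
  note adinv = adinv[OF cla mm] and anti = br_antisym[OF cla mm] and brxx = brxx[OF cla mm]
  note sym = sym[OF cla mm] and koszul = koszul[OF cla mm]
  define E where "E = eigenvalues_of \<Phi>"
  define l where "l = Min E"
  have finE: "finite E" using fin_eig[OF cla mm] E_def by simp
  have PX: "\<Phi> X = l *\<^sub>R X" using assms(4) by (simp add: smallest_eigenspace_def eigenspace_def l_def E_def)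
  then have "l \<in> E" using False by (auto simp: E_def eigenvalues_of_def)
  obtain \<mu> where mu: "\<mu> \<in> E" "\<And>x. inner (\<Phi> x) x \<ge> \<mu> * inner x x"
    using rayleigh_min[OF cla mm] E_def by blast
  have "l \<le> \<mu>" unfolding l_def using finE mu(1) by simp
  then have ray: "inner (\<Phi> x) x \<ge> l * inner x x" for x
    using mu(2)[of x] by (meson inner_ge_zero mult_right_mono order_trans)
  have lpos: "l > 0"
  proof -
    have "inner (\<Phi> X) X > 0" using pos[OF cla mm False] .
    then have "0 < l * inner X X" using PX by simp
    then show ?thesis by (metis inner_ge_zero not_less zero_less_mult_iff)
  qed
  define W where "W = inv \<Phi> Y"
  have PW: "\<Phi> W = Y" unfolding W_def by (rule Phi_inv[OF cla mm])
  define U where "U = br X W"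
  define V where "V = inv \<Phi> U"
  have PV: "\<Phi> V = U" unfolding V_def by (rule Phi_inv[OF cla mm])
  have WX: "br W X = - U" using anti[of X W] U_def by simp
  let ?h = "lmetric \<Phi>"
  let ?n = "levi_civita br \<Phi>"
  have hX: "?h Z X = l * inner Z X" for Z unfolding lmetric_def using sym PX by simp
  have T1: "?h (?n X P) X = 0" for P
  proof -
    have "2 * ?h (?n X P) X = ?h (br X P) X - ?h (br P X) X + ?h (br X X) P" by (rule koszul)
    moreover have i: "inner (br X P) X = 0" using adinv[of X P X] brxx by simp
    moreover have "?h (br X P) X = 0" using hX[of "br X P"] i by simp
    moreover have "?h (br P X) X = 0" using hX[of "br P X"] anti[of X P] i by simp
    moreover have "?h (br X X) P = 0" using brxx lin[OF cla mm] by (simp add: lmetric_def linear_0)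
    ultimately show ?thesis by simp
  qed
  define Q where "Q = ?n X W"
  have KQ: "2 * ?h Q Z = inner (\<Phi> U) Z - l * inner Z U" for Z
  proof -
    have "2 * ?h Q Z = ?h U Z - ?h (br W Z) X + ?h (br Z X) W" unfolding Q_def U_def by (rule koszul)
    moreover have "?h (br W Z) X = l * inner Z U"
      using hX adinv[of W Z X] WX by simp
    moreover have "?h (br Z X) W = 0"
    proof -
      have "?h (br Z X) W = inner (br Z X) Y" using sym PW by (simp add: lmetric_def)
      also have "\<dots> = - inner (br X Z) Y" using anti[of X Z] by simp
      also have "\<dots> = inner Z (br X Y)" using adinv[of X Z Y] by simp
      finally show ?thesis using assms(5) by simp
    qed
    ultimately show ?thesis by (simp add: lmetric_def)
  qed
  have T2: "4 * ?h (?n W Q) X = inner (\<Phi> U) U - l * l * inner V U"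
  proof -
    have "2 * ?h (?n W Q) X = ?h (br W Q) X - ?h (br Q X) W + ?h (br X W) Q" by (rule koszul)
    moreover have "?h (br W Q) X = l * inner Q U" using hX adinv[of W Q X] WX by simp
    moreover have "?h (br Q X) W = 0"
    proof -
      have "?h (br Q X) W = inner (br Q X) Y" using sym PW by (simp add: lmetric_def)
      also have "\<dots> = - inner (br X Q) Y" using anti[of X Q] by simp
      also have "\<dots> = inner Q (br X Y)" using adinv[of X Q Y] by simp
      finally show ?thesis using assms(5) by simp
    qed
    moreover have "?h (br X W) Q = inner Q (\<Phi> U)" unfolding U_def lmetric_def by (simp add: inner_commute)
    ultimately have "2 * ?h (?n W Q) X = l * inner Q U + inner Q (\<Phi> U)" by simp
    also have "\<dots> = ?h Q (l *\<^sub>R V + U)"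
      unfolding lmetric_def using sym[of Q V] sym[of Q U] PV by (simp add: inner_add_right inner_commute)
    finally have a: "4 * ?h (?n W Q) X = 2 * ?h Q (l *\<^sub>R V + U)" by simp
    have "inner (\<Phi> U) V = inner U U" using sym[of U V] PV by simp
    then have "2 * ?h Q (l *\<^sub>R V + U) = inner (\<Phi> U) U - l * l * inner V U"
      using KQ[of "l *\<^sub>R V + U"] by (simp add: inner_add_right inner_add_left algebra_simps inner_commute)
    with a show ?thesis by simp
  qed
  have T3: "2 * ?h (?n U W) X = inner (\<Phi> U) U - l * inner U U"
  proof -
    have "2 * ?h (?n U W) X = ?h (br U W) X - ?h (br W X) U + ?h (br X U) W" by (rule koszul)
    moreover have "?h (br U W) X = - l * inner U U"
    proof -
      have "inner (br U W) X = - inner (br W U) X" using anti[of W U] by simp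
      also have "\<dots> = inner U (br W X)" using adinv[of W U X] by simp
      finally show ?thesis using hX WX by simp
    qed
    moreover have "?h (br W X) U = - inner (\<Phi> U) U" using WX lin[OF cla mm]
      by (simp add: lmetric_def linear_neg)
    moreover have "?h (br X U) W = 0"
    proof -
      have "?h (br X U) W = inner (br X U) Y" using sym PW by (simp add: lmetric_def)
      also have "\<dots> = - inner U (br X Y)" using adinv[of X U Y] by simp
      finally show ?thesis using assms(5) by simp
    qed
    ultimately show ?thesis by simp
  qed
  have sec: "?h (curvature br \<Phi> X W W) X \<ge> 0" using assms(3) by (simp add: nonneg_sec_curv_def)
  have "?h (curvature br \<Phi> X W W) X = ?h (?n X (?n W W)) X - ?h (?n W Q) X - ?h (?n U W) X"
    unfolding curvature_def Q_def U_def lmetric_def using lin[OF cla mm]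
    by (simp add: linear_diff inner_diff_left)
  then have main: "0 \<le> - (inner (\<Phi> U) U - l * l * inner V U) - 2 * (inner (\<Phi> U) U - l * inner U U)"
    using sec T1 T2 T3 by simp
  have r1: "inner (\<Phi> U) U \<ge> l * inner U U" by (rule ray)
  have r2: "l * inner V U \<le> inner U U"
  proof -
    define D where "D = U - l *\<^sub>R V"
    have "inner V U = inner (\<Phi> V) V" using PV by (simp add: inner_commute)
    have "inner U U - l * inner V U = inner D U" unfolding D_def by (simp add: inner_diff_left)
    also have "\<dots> = inner D (D + l *\<^sub>R V)" unfolding D_def by simp
    also have "\<dots> = inner D D + l * (inner (\<Phi> V) V - l * inner V V)"
      unfolding D_def using PV by (simp add: inner_add_right inner_diff_left inner_commute algebra_simps)
    finally have "inner U U - l * inner V U = inner D D + l * (inner (\<Phi> V) V - l * inner V V)" .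
    moreover have "inner (\<Phi> V) V - l * inner V V \<ge> 0" using ray[of V] by simp
    ultimately show ?thesis using lpos by (smt (verit) inner_ge_zero mult_nonneg_nonneg)
  qed
  have "l * l * inner V U \<le> l * inner U U" using r2 lpos
    by (metis mult.assoc mult_left_mono less_imp_le)
  then have "inner (\<Phi> U) U = l * inner U U" using main r1 by (smt (verit))
  then have "\<Phi> U = l *\<^sub>R U" by (rule rayleigh_eq[OF cla mm ray])
  then show ?thesis unfolding U_def W_def smallest_eigenspace_def eigenspace_def l_def E_def by simp
qed

end
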